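(* There exists a continuous function $f\colon[0,1]\to\mathbb{R}$ such that, with $x_n:=\sum_{k=1}^{n-1} f\big(\tfrac kn\big)$ and $y_n:=x_{n+1}-x_n$ for natural $n$, the limit $\lim_{n\to\infty} y_n$ does not exist. *)

theory Defs
  imports "HOL-Analysis.Analysis"
begin

end

theory Submission
  imports Defs "HOL-Computational_Algebra.Primes"
begin

lemma cos_sum_aux:
  fixes m n :: nat
  assumes "n \<ge> 1"
  shows "(\<Sum>k<n. cos (2 * pi * real m * real k / real n)) = (if n dvd m then real n else 0)"
proof -
  define z where "z = exp (2 * of_real pi * \<i> * of_nat m / of_nat n)"
  have zk: "z ^ k = exp (complex_of_real (2 * pi * real m * real k / real n) * \<i>)" for k
    unfolding z_def by (simp add: exp_of_nat_mult[symmetric] algebra_simps)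
  have re: "Re (z ^ k) = cos (2 * pi * real m * real k / real n)" for k
    unfolding zk by (simp add: Re_exp)
  have "(\<Sum>k<n. cos (2 * pi * real m * real k / real n)) = Re (\<Sum>k<n. z ^ k)"
    by (simp add: re)
  also have "(\<Sum>k<n. z ^ k) = (if n dvd m then of_nat n else 0)"
  proof (cases "n dvd m")
    case True
    then have "z = 1" unfolding z_def using complex_root_unity_eq_1[OF assms] by simp
    then show ?thesis using True by simp
  next
    case False
    then have "z \<noteq> 1" unfolding z_def using complex_root_unity_eq_1[OF assms] by simp
    moreover have "z ^ n = 1" unfolding z_def using complex_root_unity assms by simp
    ultimately show ?thesis using False by (simp add: geometric_sum)
  qed
  finally show ?thesis by simp
qed

lemma cos_sum:
  fixes m n :: nat
  assumes "n \<ge> 1"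
  shows "(\<Sum>k=1..<n. cos (2 * pi * real m * real k / real n)) = (if n dvd m then real n - 1 else -1)"
proof -
  have "{..<n} = insert 0 {1..<n}" using assms by auto
  then have "(\<Sum>k<n. cos (2 * pi * real m * real k / real n)) = 1 + (\<Sum>k=1..<n. cos (2 * pi * real m * real k / real n))"
    by simp
  then show ?thesis using cos_sum_aux[OF assms, of m] by (auto split: if_splits)
qed


definition wfn :: "real \<Rightarrow> real" where
  "wfn x = (\<Sum>j. cos (2 * pi * 2 ^ j * x) / 2 ^ j)"

lemma wf_summable: "summable (\<lambda>j. cos (2 * pi * 2 ^ j * x) / (2::real) ^ j)"
proof (rule summable_comparison_test[OF _ summable_geometric[of "1/2::real"]])
  show "\<exists>N. \<forall>n\<ge>N. norm (cos (2 * pi * 2 ^ n * x) / (2::real) ^ n) \<le> (1 / 2) ^ n"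
    by (auto simp: power_divide divide_right_mono)
qed simp

lemma sg: "summable (\<lambda>j. 1 / (2::real) ^ j)"
  using summable_geometric[of "1/2::real"] by (simp add: power_divide)

lemma p2dvd: "((2::nat) ^ i dvd 2 ^ j) = (i \<le> j)"
proof
  assume "i \<le> j" then show "(2::nat) ^ i dvd 2 ^ j" by (rule le_imp_power_dvd)
next
  assume d: "(2::nat) ^ i dvd 2 ^ j"
  show "i \<le> j"
  proof (rule ccontr)
    assume "\<not> i \<le> j"
    then have "(2::nat) ^ j < 2 ^ i" by simp
    moreover have "(0::nat) < 2 ^ j" by simp
    ultimately show False using d nat_dvd_not_less by blast
  qed
qed

lemma wf_cont: "continuous_on {0..1} wfn"
proof -
  have ul: "uniform_limit {0..1} (\<lambda>n x. \<Sum>j<n. cos (2 * pi * 2 ^ j * x) / (2::real) ^ j)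
          (\<lambda>x. \<Sum>j. cos (2 * pi * 2 ^ j * x) / 2 ^ j) sequentially"
    by (rule Weierstrass_m_test[where M = "\<lambda>j. (1/2) ^ j"])
       (auto simp: power_divide divide_right_mono sg)
  have c: "\<And>n. continuous_on {0..1} (\<lambda>x. \<Sum>j<n. cos (2 * pi * 2 ^ j * x) / (2::real) ^ j)"
    by (intro continuous_intros) simp
  show ?thesis unfolding wfn_def
    by (rule uniform_limit_theorem[OF _ ul]) (simp_all add: c always_eventually)
qed

lemma wf_x:
  fixes n :: nat assumes "n \<ge> 1"
  shows "(\<Sum>k = 1..<n. wfn (real k / real n)) = (\<Sum>j. (if n dvd 2 ^ j then real n - 1 else -1) / 2 ^ j)"
proof -
  have "(\<Sum>k = 1..<n. wfn (real k / real n)) = (\<Sum>j. \<Sum>k = 1..<n. cos (2 * pi * 2 ^ j * (real k / real n)) / 2 ^ j)"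
    unfolding wfn_def by (rule suminf_sum[symmetric]) (rule wf_summable)
  also have "\<dots> = (\<Sum>j. (if n dvd 2 ^ j then real n - 1 else -1) / 2 ^ j)"
  proof (rule suminf_cong)
    fix j :: nat
    have "(\<Sum>k = 1..<n. cos (2 * pi * 2 ^ j * (real k / real n)) / 2 ^ j)
        = (\<Sum>k = 1..<n. cos (2 * pi * real (2 ^ j) * real k / real n)) / 2 ^ j"
      by (simp add: sum_divide_distrib)
    also have "\<dots> = (if n dvd 2 ^ j then real n - 1 else -1) / 2 ^ j"
      using cos_sum[OF assms, of "2 ^ j"] by simp
    finally show "(\<Sum>k = 1..<n. cos (2 * pi * 2 ^ j * (real k / real n)) / 2 ^ j) = (if n dvd 2 ^ j then real n - 1 else -1) / 2 ^ j" .
  qed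
  finally show ?thesis .
qed

lemma wf_x_nodvd:
  fixes n :: nat assumes "n \<ge> 1" "\<And>j. \<not> n dvd 2 ^ j"
  shows "(\<Sum>k = 1..<n. wfn (real k / real n)) = -2"
proof -
  have "(\<lambda>j. - ((1/2::real) ^ j)) sums (- (1 / (1 - 1/2)))"
    by (intro sums_minus geometric_sums) simp
  then have "(\<lambda>j. (if n dvd 2 ^ j then real n - 1 else -1) / (2::real) ^ j) sums (-2)"
    using assms(2) by (simp add: power_divide)
  then show ?thesis using wf_x[OF assms(1)] sums_unique by metis
qed

lemma wf_x_pow:
  fixes i :: nat
  shows "(\<Sum>k = 1..<2^i. wfn (real k / real (2^i::nat))) = 0"
proof -
  let ?g = "\<lambda>j::nat. (if i \<le> j then (2::real) ^ i / 2 ^ j else 0)"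
  have "(\<lambda>j. ?g (j + i)) = (\<lambda>j. (1/2::real) ^ j)"
    by (auto simp: power_add power_divide)
  then have "(\<lambda>j. ?g (j + i)) sums 2"
    using geometric_sums[of "1/2::real"] by simp
  then have "?g sums (2 + sum ?g {..<i})" using sums_iff_shift[of ?g i 2] by blast
  moreover have "sum ?g {..<i} = 0" by simp
  ultimately have g: "?g sums 2" by simp
  have h: "(\<lambda>j. - ((1/2::real) ^ j)) sums (- (1 / (1 - 1/2)))"
    by (intro sums_minus geometric_sums) simp
  have "(\<lambda>j. ?g j + - ((1/2::real) ^ j)) sums (2 + - (1 / (1 - 1/2)))"
    by (rule sums_add[OF g h])
  moreover have "(2::real) + - (1 / (1 - 1/2)) = 0" by simp
  moreover have "(\<lambda>j. ?g j + - ((1/2::real) ^ j)) = (\<lambda>j. (if (2::nat) ^ i dvd 2 ^ j then real (2^i::nat) - 1 else -1) / (2::real) ^ j)"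
  proof
    fix j show "?g j + - ((1/2::real) ^ j) = (if (2::nat) ^ i dvd 2 ^ j then real (2^i::nat) - 1 else -1) / (2::real) ^ j"
      unfolding p2dvd by (simp add: power_divide diff_divide_distrib)
  qed
  ultimately have "(\<lambda>j. (if (2::nat) ^ i dvd 2 ^ j then real (2^i::nat) - 1 else -1) / (2::real) ^ j) sums 0"
    by metis
  then have s0: "(\<Sum>j. (if (2::nat) ^ i dvd 2 ^ j then real (2^i::nat) - 1 else -1) / (2::real) ^ j) = 0"
    by (rule sums_unique[symmetric])
  have p: "1 \<le> (2::nat) ^ i" by simp
  show ?thesis using wf_x[OF p] s0 by (rule trans)
qed

lemma pow2_dvd: "(n::nat) dvd 2 ^ j \<Longrightarrow> \<exists>l. n = 2 ^ l"
  using divides_primepow_nat[of "2::nat" n j] by auto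

lemma not_dvd1: "i \<ge> 1 \<Longrightarrow> \<not> (2 ^ i + 1 :: nat) dvd 2 ^ j"
proof
  assume "i \<ge> 1" "(2 ^ i + 1 :: nat) dvd 2 ^ j"
  then obtain l where l: "(2::nat) ^ i + 1 = 2 ^ l" using pow2_dvd by blast
  show False
  proof (cases l)
    case 0 then show ?thesis using l by simp
  next
    case (Suc l')
    have "even ((2::nat) ^ i)" using \<open>i \<ge> 1\<close> by simp
    then have "odd ((2::nat) ^ i + 1)" by simp
    then have o: "odd ((2::nat) ^ l)" using l by metis
    have "even ((2::nat) ^ l)" using Suc by simp
    then show ?thesis using o by blast
  qed
qed

lemma not_dvd2: "i \<ge> 2 \<Longrightarrow> \<not> (2 ^ i + 2 :: nat) dvd 2 ^ j"
proof
  assume i: "i \<ge> 2" and "(2 ^ i + 2 :: nat) dvd 2 ^ j"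
  then have "(2 ^ (i - 1) + 1) * 2 dvd (2::nat) ^ j"
  proof -
    obtain i' where "i = Suc i'" using i by (cases i) auto
    then have "(2::nat) ^ i + 2 = (2 ^ (i - 1) + 1) * 2" by simp
    then show ?thesis using \<open>(2 ^ i + 2 :: nat) dvd 2 ^ j\<close> by simp
  qed
  then have "(2 ^ (i - 1) + 1::nat) dvd 2 ^ j" using dvd_mult_left by blast
  moreover have "i - 1 \<ge> 1" using i by simp
  ultimately show False using not_dvd1 by blast
qed

lemma nd1: "i \<ge> 1 \<Longrightarrow> \<not> Suc (2 ^ i) dvd 2 ^ j"
  using not_dvd1[of i j] by simp

lemma nd2: "i \<ge> 2 \<Longrightarrow> \<not> Suc (Suc (2 ^ i)) dvd 2 ^ j"
  using not_dvd2[of i j] by simp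

theorem theorem1:
  shows "\<exists>f :: real \<Rightarrow> real. continuous_on {0..1} f \<and>
           (let x = (\<lambda>n::nat. \<Sum>k = 1..<n. f (real k / real n))
            in \<not> convergent (\<lambda>n. x (Suc n) - x n))"
proof (intro exI conjI)
  show "continuous_on {0..1} wfn" by (rule wf_cont)
  define x where "x = (\<lambda>n::nat. \<Sum>k = 1..<n. wfn (real k / real n))"
  define y where "y = (\<lambda>n. x (Suc n) - x n)"
  have xa: "x (Suc (2 ^ (i + 2))) = -2" for i
    unfolding x_def
  proof (rule wf_x_nodvd)
    fix j show "\<not> Suc (2 ^ (i + 2)) dvd 2 ^ j" by (rule nd1) simp
  qed simp
  have xb: "x (Suc (Suc (2 ^ (i + 2)))) = -2" for i
    unfolding x_def
  proof (rule wf_x_nodvd)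
    fix j show "\<not> Suc (Suc (2 ^ (i + 2))) dvd 2 ^ j" by (rule nd2) simp
  qed simp
  have xc: "x (2 ^ (i + 2)) = 0" for i
    using wf_x_pow[of "i + 2"] unfolding x_def .
  have y1: "y (2 ^ (i + 2)) = -2" for i
    unfolding y_def using xa[of i] xc[of i] by simp
  have y2: "y (2 ^ (i + 2) + 1) = 0" for i
    unfolding y_def using xa[of i] xb[of i] by simp
  have "\<not> convergent y"
  proof
    assume "convergent y"
    then obtain L where L: "y \<longlonglongrightarrow> L" by (auto simp: convergent_def)
    have sm1: "strict_mono (\<lambda>i::nat. (2::nat) ^ (i + 2))"
      by (rule strict_monoI) simp
    have sm2: "strict_mono (\<lambda>i::nat. (2::nat) ^ (i + 2) + 1)"
      by (rule strict_monoI) simp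
    have e1: "(\<lambda>i. y (2 ^ (i + 2))) = (\<lambda>i. -2)" by (rule ext) (rule y1)
    have e2: "(\<lambda>i. y (2 ^ (i + 2) + 1)) = (\<lambda>i. 0)" by (rule ext) (rule y2)
    have "(\<lambda>i. y (2 ^ (i + 2))) \<longlonglongrightarrow> L"
      using LIMSEQ_subseq_LIMSEQ[OF L sm1] unfolding comp_def .
    then have "(\<lambda>i. -2::real) \<longlonglongrightarrow> L" unfolding e1 .
    then have "L = -2" using LIMSEQ_unique[OF tendsto_const] by metis
    moreover have "(\<lambda>i. y (2 ^ (i + 2) + 1)) \<longlonglongrightarrow> L"
      using LIMSEQ_subseq_LIMSEQ[OF L sm2] unfolding comp_def .
    then have "(\<lambda>i. 0::real) \<longlonglongrightarrow> L" unfolding e2 .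
    then have "L = 0" using LIMSEQ_unique[OF tendsto_const] by metis
    ultimately show False by simp
  qed
  then show "let x = (\<lambda>n::nat. \<Sum>k = 1..<n. wfn (real k / real n)) in \<not> convergent (\<lambda>n. x (Suc n) - x n)"
    unfolding x_def y_def Let_def .
qed

end
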